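(* Let $V$ be a reflexive Banach space, $1<p<\infty$, and let $W$ be a Banach space compactly embedded in $V$. If $g\in L^p_b(\mathbb R,W)$, then $g$ is space regular as a function in $L^p_b(\mathbb R,V)$.
   Context: $L^p_b(\mathbb R,X)$ has norm $\sup_{s\in\mathbb R}\|g\|_{L^p((s,s+1),X)}$. A function $g\in L^p_b(\mathbb R,V)$ is space regular if for every $\varepsilon>0$ there exist a finite-dimensional subspace $V_\varepsilon\subset V$ and $g_\varepsilon\in L^p_b(\mathbb R,V_\varepsilon)$ with $\|g-g_\varepsilon\|_{L^p_b(\mathbb R,V)}\le\varepsilon$. *)

theory Defs
  imports "HOL-Analysis.Analysis"
begin

definition reflexive_space :: "'a::real_normed_vector itself \<Rightarrow> bool" where
  "reflexive_space TYPE('a) \<longleftrightarrow>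
     (\<forall>\<phi> :: ('a \<Rightarrow>\<^sub>L real) \<Rightarrow>\<^sub>L real. \<exists>v::'a. \<forall>f. blinfun_apply \<phi> f = blinfun_apply f v)"

definition compact_embedding :: "('w::real_normed_vector \<Rightarrow> 'v::real_normed_vector) \<Rightarrow> bool" where
  "compact_embedding i \<longleftrightarrow> bounded_linear i \<and> inj i \<and>
     (\<forall>B. bounded B \<longrightarrow> compact (closure (i ` B)))"

definition strongly_measurable :: "(real \<Rightarrow> 'a::real_normed_vector) \<Rightarrow> bool" where
  "strongly_measurable g \<longleftrightarrow>
     (\<exists>s :: nat \<Rightarrow> real \<Rightarrow> 'a. (\<forall>n. simple_function lebesgue (s n)) \<and>
        (AE x in lebesgue. (\<lambda>n. s n x) \<longlonglongrightarrow> g x))"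

definition Lpb_pnorm :: "real \<Rightarrow> (real \<Rightarrow> 'a::real_normed_vector) \<Rightarrow> ennreal" where
  "Lpb_pnorm p g = (SUP s::real. \<integral>\<^sup>+ x \<in> {s<..<s+1}. ennreal (norm (g x) powr p) \<partial>lebesgue)"

definition Lpb :: "real \<Rightarrow> (real \<Rightarrow> 'a::real_normed_vector) \<Rightarrow> bool" where
  "Lpb p g \<longleftrightarrow> strongly_measurable g \<and> Lpb_pnorm p g < \<infinity>"

text \<open>Space regularity in L^p_b(R,V); the condition norm(g - g_eps) <= eps is
  expressed as (p-th power of norm) <= eps^p.\<close>
definition space_regular :: "real \<Rightarrow> (real \<Rightarrow> 'a::real_normed_vector) \<Rightarrow> bool" where
  "space_regular p g \<longleftrightarrow> Lpb p g \<and>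
     (\<forall>\<epsilon>>0. \<exists>S :: 'a set. \<exists>g\<epsilon> :: real \<Rightarrow> 'a.
        subspace S \<and> (\<exists>B. finite B \<and> S = span B) \<and>
        Lpb p g\<epsilon> \<and> (\<forall>x. g\<epsilon> x \<in> S) \<and>
        Lpb_pnorm p (\<lambda>x. g x - g\<epsilon> x) \<le> ennreal (\<epsilon> powr p))"

end

theory Submission
  imports Defs
begin

lemma sm_meas:
  fixes g :: "real \<Rightarrow> 'a::real_normed_vector"
  assumes "strongly_measurable g"
  shows "g \<in> borel_measurable lebesgue"
proof -
  obtain s where s: "\<And>n. simple_function lebesgue (s n)"
    and ae: "AE x in lebesgue. (\<lambda>n. s n x) \<longlonglongrightarrow> g x"
    using assms unfolding strongly_measurable_def by blast
  obtain N where sub: "{x\<in>space lebesgue. \<not> (\<lambda>n. s n x) \<longlonglongrightarrow> g x} \<subseteq> N"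
    and N0: "emeasure lebesgue N = 0" and Nm: "N \<in> sets lebesgue"
    by (rule AE_E[OF ae])
  have N: "N \<in> null_sets lebesgue" using N0 Nm by auto
  define h where "h x = (if x \<in> N then 0 else g x)" for x
  have hm: "h \<in> borel_measurable lebesgue"
  proof (rule borel_measurable_LIMSEQ_metric)
    show "(\<lambda>x. if x \<in> N then 0 else s i x) \<in> borel_measurable lebesgue" for i
      using s[of i] Nm by (intro measurable_If_set borel_measurable_simple_function) auto
    show "(\<lambda>i. if x \<in> N then 0 else s i x) \<longlonglongrightarrow> h x" if "x \<in> space lebesgue" for x
      using sub that by (auto simp: h_def)
  qed
  show ?thesis
  proof (rule measurableI)
    fix A :: "'a set" assume A: "A \<in> sets borel"
    have "g -` A \<inter> space lebesgue = ((h -` A \<inter> space lebesgue) - N) \<union> (g -` A \<inter> N)"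
      by (auto simp: h_def)
    moreover have "(h -` A \<inter> space lebesgue) - N \<in> sets lebesgue"
      using measurable_sets[OF hm A] Nm by (intro sets.Diff) auto
    moreover have "g -` A \<inter> N \<in> sets lebesgue"
      using completion.complete[of "g -` A \<inter> N" N lborel] N by auto
    ultimately show "g -` A \<inter> space lebesgue \<in> sets lebesgue" by (metis sets.Un)
  qed auto
qed

lemma sm_comp:
  fixes g :: "real \<Rightarrow> 'a::real_normed_vector" and F :: "'a \<Rightarrow> 'b::real_normed_vector"
  assumes "strongly_measurable g" and "continuous_on UNIV F"
  shows "strongly_measurable (\<lambda>x. F (g x))"
proof -
  obtain s where s: "\<And>n. simple_function lebesgue (s n)"
    and ae: "AE x in lebesgue. (\<lambda>n. s n x) \<longlonglongrightarrow> g x"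
    using assms unfolding strongly_measurable_def by blast
  show ?thesis unfolding strongly_measurable_def
  proof (intro exI conjI allI)
    show "simple_function lebesgue (\<lambda>x. F (s n x))" for n
      using s by (rule simple_function_compose1)
    show "AE x in lebesgue. (\<lambda>n. F (s n x)) \<longlonglongrightarrow> F (g x)"
      using ae
    proof eventually_elim
      case (elim x)
      have "isCont F (g x)" using assms(2) by (simp add: continuous_on_eq_continuous_at)
      then show ?case using elim by (rule isCont_tendsto_compose)
    qed
  qed
qed

lemma pnorm_le:
  fixes f :: "real \<Rightarrow> 'a::real_normed_vector" and g :: "real \<Rightarrow> 'b::real_normed_vector"
  assumes p: "p \<ge> 0" and c: "c \<ge> 0" and gm: "g \<in> borel_measurable lebesgue"
    and le: "\<And>x. norm (f x) \<le> c * norm (g x)"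
  shows "Lpb_pnorm p f \<le> ennreal (c powr p) * Lpb_pnorm p g"
proof -
  have I: "(\<integral>\<^sup>+ x \<in> {s<..<s+1}. ennreal (norm (f x) powr p) \<partial>lebesgue)
      \<le> ennreal (c powr p) * (\<integral>\<^sup>+ x \<in> {s<..<s+1}. ennreal (norm (g x) powr p) \<partial>lebesgue)" for s
  proof -
    have "(\<integral>\<^sup>+ x \<in> {s<..<s+1}. ennreal (norm (f x) powr p) \<partial>lebesgue)
       \<le> (\<integral>\<^sup>+ x. ennreal (c powr p) * (ennreal (norm (g x) powr p) * indicator {s<..<s+1} x) \<partial>lebesgue)"
    proof (intro nn_integral_mono)
      fix x
      have "norm (f x) powr p \<le> (c * norm (g x)) powr p"
        using le[of x] p by (intro powr_mono2) auto
      also have "\<dots> = c powr p * norm (g x) powr p" using c by (simp add: powr_mult)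
      finally have "ennreal (norm (f x) powr p) \<le> ennreal (c powr p) * ennreal (norm (g x) powr p)"
        by (simp add: ennreal_mult'[symmetric])
      then show "ennreal (norm (f x) powr p) * indicator {s<..<s+1} x
          \<le> ennreal (c powr p) * (ennreal (norm (g x) powr p) * indicator {s<..<s+1} x)"
        by (auto split: split_indicator)
    qed
    also have "\<dots> = ennreal (c powr p) * (\<integral>\<^sup>+ x \<in> {s<..<s+1}. ennreal (norm (g x) powr p) \<partial>lebesgue)"
    proof (intro nn_integral_cmult)
      have [measurable]: "{s<..<s+1} \<in> sets lebesgue" by simp
      show "(\<lambda>x. ennreal (norm (g x) powr p) * indicator {s<..<s+1} x) \<in> borel_measurable lebesgue"
        using gm by measurable
    qed
    finally show ?thesis .
  qed
  show ?thesis unfolding Lpb_pnorm_def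
  proof (rule SUP_least)
    fix s :: real
    have "(\<integral>\<^sup>+ x \<in> {s<..<s+1}. ennreal (norm (g x) powr p) \<partial>lebesgue)
       \<le> (SUP s::real. \<integral>\<^sup>+ x \<in> {s<..<s+1}. ennreal (norm (g x) powr p) \<partial>lebesgue)"
      by (rule SUP_upper) simp
    then show "(\<integral>\<^sup>+ x \<in> {s<..<s+1}. ennreal (norm (f x) powr p) \<partial>lebesgue)
       \<le> ennreal (c powr p) * (SUP s::real. \<integral>\<^sup>+ x \<in> {s<..<s+1}. ennreal (norm (g x) powr p) \<partial>lebesgue)"
      using I[of s] by (meson mult_left_mono order_trans zero_le)
  qed
qed

lemma approx_map:
  fixes i :: "'w::real_normed_vector \<Rightarrow> 'v::real_normed_vector"
  assumes ce: "compact_embedding i" and dpos: "\<delta> > 0"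
  obtains F :: "'w \<Rightarrow> 'v" and V0 :: "'v set" and C :: real where "finite V0" "continuous_on UNIV F"
    "\<And>w. F w \<in> span V0" "\<And>w. norm (i w - F w) \<le> \<delta> * norm w" "C \<ge> 0"
    "\<And>w. norm (F w) \<le> C * norm w"
proof -
  have bl: "bounded_linear i" and cpt: "\<And>B. bounded B \<Longrightarrow> compact (closure (i ` B))"
    using ce unfolding compact_embedding_def by auto
  interpret i: bounded_linear i by (rule bl)
  define K where "K = closure (i ` sphere 0 1)"
  have cK: "compact K" unfolding K_def by (rule cpt) (rule bounded_subset[OF bounded_cball sphere_cball])
  have sK: "K \<subseteq> (\<Union>v\<in>K. ball v \<delta>)" using dpos by auto
  obtain V0 where V0K: "V0 \<subseteq> K" and fin: "finite V0" and cov: "K \<subseteq> (\<Union>v\<in>V0. ball v \<delta>)"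
    using compactE_image[OF cK _ sK] by auto
  have net: "\<exists>v\<in>V0. norm (i w - v) < \<delta>" if "norm w = 1" for w
  proof -
    have "i w \<in> K" unfolding K_def using that by (intro closure_subset[THEN subsetD]) auto
    then obtain v where "v \<in> V0" "dist v (i w) < \<delta>" using cov by auto
    then show ?thesis by (auto simp: dist_norm norm_minus_commute)
  qed
  define d where "d v w = max 0 (\<delta> * norm w - norm (i w - norm w *\<^sub>R v))" for v w
  define D where "D w = (\<Sum>v\<in>V0. d v w)" for w
  define F where "F w = (\<Sum>v\<in>V0. (d v w * norm w / D w) *\<^sub>R v)" for w
  define C where "C = (\<Sum>v\<in>V0. norm v)"
  have d0: "d v w \<ge> 0" for v w by (simp add: d_def)
  have dleD: "d v w \<le> D w" if "v \<in> V0" for v w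
    unfolding D_def using fin that d0 by (intro member_le_sum) auto
  have Dpos: "D w > 0" if "w \<noteq> 0" for w
  proof -
    define w' where "w' = w /\<^sub>R norm w"
    have "norm w' = 1" using that by (simp add: w'_def)
    then obtain v where v: "v \<in> V0" "norm (i w' - v) < \<delta>" using net by blast
    have "i w = norm w *\<^sub>R i w'" using that by (simp add: w'_def i.scaleR)
    then have "i w - norm w *\<^sub>R v = norm w *\<^sub>R (i w' - v)" by (simp add: algebra_simps)
    then have "norm (i w - norm w *\<^sub>R v) = norm w * norm (i w' - v)" by simp
    also have "\<dots> < norm w * \<delta>" using v that by simp
    finally have "d v w > 0" by (simp add: d_def mult.commute)
    then show ?thesis unfolding D_def using fin v d0 by (intro sum_pos2) auto
  qed
  have F0: "F 0 = 0" by (simp add: F_def)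
  have coef: "0 \<le> d v w * norm w / D w \<and> d v w * norm w / D w \<le> norm w" if "v \<in> V0" for v w
  proof (cases "w = 0")
    case True then show ?thesis by simp
  next
    case False
    have "d v w / D w \<le> 1" using dleD[OF that, of w] Dpos[OF False] by simp
    then have "(d v w / D w) * norm w \<le> 1 * norm w" by (intro mult_right_mono) auto
    then show ?thesis using d0[of v w] Dpos[OF False] by auto
  qed
  have Fb: "norm (F w) \<le> C * norm w" for w
  proof -
    have "norm (F w) \<le> (\<Sum>v\<in>V0. norm ((d v w * norm w / D w) *\<^sub>R v))"
      unfolding F_def by (rule norm_sum)
    also have "\<dots> \<le> (\<Sum>v\<in>V0. norm w * norm v)"
    proof (intro sum_mono)
      fix v assume v: "v \<in> V0"
      have "norm ((d v w * norm w / D w) *\<^sub>R v) = (d v w * norm w / D w) * norm v"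
        using coef[OF v, of w] by (simp only: norm_scaleR abs_of_nonneg)
      also have "\<dots> \<le> norm w * norm v" using coef[OF v, of w] by (intro mult_right_mono) auto
      finally show "norm ((d v w * norm w / D w) *\<^sub>R v) \<le> norm w * norm v" .
    qed
    also have "\<dots> = C * norm w" by (simp add: C_def sum_distrib_left mult.commute)
    finally show ?thesis .
  qed
  have cont: "isCont F w" for w
  proof (cases "w = 0")
    case False
    have "D w \<noteq> 0" using Dpos[OF False] by simp
    have ci: "isCont i x" for x by (rule i.isCont) simp
    show ?thesis unfolding F_def D_def d_def using \<open>D w \<noteq> 0\<close> unfolding D_def d_def
      by (intro continuous_intros ci) auto
  next
    case True
    have "(F \<longlongrightarrow> 0) (at 0)"
    proof (rule Lim_null_comparison)
      show "\<forall>\<^sub>F x in at 0. norm (F x) \<le> C * norm x" using Fb by simp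
      show "((\<lambda>x. C * norm x) \<longlongrightarrow> 0) (at (0::'w))"
        by (auto intro!: tendsto_eq_intros)
    qed
    then show ?thesis using True F0 by (simp add: isCont_def)
  qed
  have err: "norm (i w - F w) \<le> \<delta> * norm w" for w
  proof (cases "w = 0")
    case True then show ?thesis by (simp add: F0)
  next
    case False
    have Dp: "D w > 0" using Dpos[OF False] .
    have s1: "(\<Sum>v\<in>V0. d v w / D w) = 1" using Dp by (simp add: D_def sum_divide_distrib[symmetric])
    have "i w - F w = (\<Sum>v\<in>V0. (d v w / D w) *\<^sub>R i w) - F w"
      by (simp add: scaleR_sum_left[symmetric] s1)
    also have "\<dots> = (\<Sum>v\<in>V0. (d v w / D w) *\<^sub>R (i w - norm w *\<^sub>R v))"
      by (simp add: F_def scaleR_diff_right sum_subtractf)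
    finally have eq: "i w - F w = (\<Sum>v\<in>V0. (d v w / D w) *\<^sub>R (i w - norm w *\<^sub>R v))" .
    have "norm (i w - F w) \<le> (\<Sum>v\<in>V0. norm ((d v w / D w) *\<^sub>R (i w - norm w *\<^sub>R v)))"
      unfolding eq by (rule norm_sum)
    also have "\<dots> \<le> (\<Sum>v\<in>V0. (d v w / D w) * (\<delta> * norm w))"
    proof (intro sum_mono)
      fix v assume "v \<in> V0"
      show "norm ((d v w / D w) *\<^sub>R (i w - norm w *\<^sub>R v)) \<le> (d v w / D w) * (\<delta> * norm w)"
      proof (cases "d v w = 0")
        case True then show ?thesis by simp
      next
        case False
        then have "norm (i w - norm w *\<^sub>R v) \<le> \<delta> * norm w" unfolding d_def by (auto split: if_splits simp: max_def)
        then show ?thesis using d0[of v w] Dp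
          by (simp add: mult_left_mono divide_right_mono)
      qed
    qed
    also have "\<dots> = (\<Sum>v\<in>V0. d v w / D w) * (\<delta> * norm w)"
      by (rule sum_distrib_right[symmetric])
    also have "\<dots> = \<delta> * norm w" by (simp only: s1 mult_1)
    finally show ?thesis .
  qed
  have span: "F w \<in> span V0" for w
    unfolding F_def by (intro span_sum span_scale span_base) 
  show ?thesis
  proof (rule that[OF fin _ span err _ Fb])
    show "continuous_on UNIV F" using cont by (simp add: continuous_on_eq_continuous_at)
    show "C \<ge> 0" by (simp add: C_def sum_nonneg)
  qed
qed

theorem proposition2p3:
  fixes i :: "'w::banach \<Rightarrow> 'v::banach" and g :: "real \<Rightarrow> 'w" and p :: real
  assumes "reflexive_space TYPE('v)"
    and "1 < p"
    and "compact_embedding i"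
    and "Lpb p g"
  shows "space_regular p (\<lambda>t. i (g t))"
proof -
  have p0: "p \<ge> 0" using assms(2) by simp
  from assms(4) have sg: "strongly_measurable g" and fin: "Lpb_pnorm p g < \<infinity>"
    by (auto simp: Lpb_def)
  have gm: "g \<in> borel_measurable lebesgue" using sm_meas[OF sg] .
  obtain M where M: "Lpb_pnorm p g = ennreal M" "M \<ge> 0"
    using fin by (cases "Lpb_pnorm p g") auto
  have bl: "bounded_linear i" using assms(3) by (simp add: compact_embedding_def)
  then obtain K where K: "K > 0" "\<And>x. norm (i x) \<le> norm x * K"
    using bounded_linear.pos_bounded by blast
  have fin_bound: "Lpb p h" if "strongly_measurable h" "c \<ge> 0" "\<And>x. norm (h x) \<le> c * norm (g x)"
    for h :: "real \<Rightarrow> 'v" and c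
  proof -
    have "Lpb_pnorm p h \<le> ennreal (c powr p) * Lpb_pnorm p g"
      by (rule pnorm_le[OF p0 that(2) gm that(3)])
    also have "\<dots> = ennreal (c powr p * M)"
      by (simp only: M(1) ennreal_mult[OF powr_ge_zero M(2), symmetric])
    also have "\<dots> < \<infinity>" by simp
    finally show ?thesis using that(1) by (simp add: Lpb_def)
  qed
  have Lig: "Lpb p (\<lambda>t. i (g t))"
  proof (rule fin_bound)
    show "strongly_measurable (\<lambda>t. i (g t))"
      using sg linear_continuous_on[OF bl] by (rule sm_comp)
    show "norm (i (g x)) \<le> K * norm (g x)" for x using K(2)[of "g x"] by (simp add: mult.commute)
    show "K \<ge> 0" using K(1) by simp
  qed
  show ?thesis unfolding space_regular_def
  proof (intro conjI allI impI Lig)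
    fix \<epsilon> :: real assume e: "\<epsilon> > 0"
    define \<delta> where "\<delta> = \<epsilon> * (1 / (M + 1)) powr (1 / p)"
    have dpos: "\<delta> > 0" unfolding \<delta>_def using e M by (intro mult_pos_pos) auto
    have dp: "\<delta> powr p = \<epsilon> powr p * (1 / (M + 1))"
    proof -
      have b: "(1 / (M + 1)) > 0" using M by simp
      have "\<delta> powr p = \<epsilon> powr p * ((1 / (M + 1)) powr (1 / p)) powr p"
        unfolding \<delta>_def by (rule powr_mult)
      also have "((1 / (M + 1)) powr (1 / p)) powr p = (1 / (M + 1)) powr (1 / p * p)"
        by (rule powr_powr)
      also have "1 / p * p = 1" using assms(2) by simp
      also have "(1 / (M + 1)) powr 1 = 1 / (M + 1)" using b by simp
      finally show ?thesis .
    qed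
    obtain V0 and F :: "'w \<Rightarrow> 'v" and C where F: "finite V0" "continuous_on UNIV F"
      "\<And>w. F w \<in> span V0" "\<And>w. norm (i w - F w) \<le> \<delta> * norm w" "C \<ge> 0"
      "\<And>w. norm (F w) \<le> C * norm w"
      using approx_map[OF assms(3) dpos] by metis
    have LF: "Lpb p (\<lambda>x. F (g x))"
      using sm_comp[OF sg F(2)] F(5) F(6) by (rule fin_bound)
    have "Lpb_pnorm p (\<lambda>x. i (g x) - F (g x)) \<le> ennreal (\<delta> powr p) * Lpb_pnorm p g"
      using dpos by (intro pnorm_le[OF p0 _ gm F(4)]) simp
    also have "\<dots> = ennreal (\<delta> powr p * M)"
      by (simp only: M(1) ennreal_mult[OF powr_ge_zero M(2), symmetric])
    also have "\<dots> \<le> ennreal (\<epsilon> powr p)"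
    proof (rule ennreal_leI)
      have "\<delta> powr p * M = \<epsilon> powr p * (M / (M + 1))" unfolding dp by simp
      also have "\<dots> \<le> \<epsilon> powr p * 1" using M by (intro mult_left_mono) auto
      finally show "\<delta> powr p * M \<le> \<epsilon> powr p" by simp
    qed
    finally have err: "Lpb_pnorm p (\<lambda>x. i (g x) - F (g x)) \<le> ennreal (\<epsilon> powr p)" .
    show "\<exists>S g\<epsilon>. subspace S \<and> (\<exists>B. finite B \<and> S = span B) \<and> Lpb p g\<epsilon> \<and> (\<forall>x. g\<epsilon> x \<in> S) \<and>
        Lpb_pnorm p (\<lambda>x. i (g x) - g\<epsilon> x) \<le> ennreal (\<epsilon> powr p)"
    proof (rule exI[of _ "span V0"], rule exI[of _ "\<lambda>x. F (g x)"], intro conjI allI)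
      show "subspace (span V0)" by (rule subspace_span)
      show "\<exists>B. finite B \<and> span V0 = span B" using F(1) by blast
      show "Lpb p (\<lambda>x. F (g x))" by (rule LF)
      show "F (g x) \<in> span V0" for x by (rule F(3))
      show "Lpb_pnorm p (\<lambda>x. i (g x) - F (g x)) \<le> ennreal (\<epsilon> powr p)" by (rule err)
    qed
  qed
qed

end
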